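(* Let $L, M\ge1$ be integers. Let $\sigma$ be $L$-periodic, $\theta$ an affine permutation of period $L$, $\sigma'$ be $ML$-periodic and $\theta'$ an affine permutation of period $ML$. Let $\mu,\mu'$ be Maya diagrams and $\nu=(\nu_+,\nu_-)$ a pair of Young diagrams, and suppose $$\sigma\circ\theta=\sigma'\circ\theta',\qquad \mu\circ\theta=\mu'\circ\theta'.$$ Then, as formal series, $$F^{(ML)}_{(\sigma',\theta';\mu',\nu)}(u'_0,\dots,u'_{ML-1})\Big|_{u'_{i+kL}=u_i\ (0\le i\le L-1,\ 0\le k\le M-1)}=F^{(L)}_{(\sigma,\theta;\mu,\nu)}(u_0,\dots,u_{L-1}).$$ Equivalently, the non-commutative topological vertex $\mathcal{C}_{(\sigma,\theta;\mu,\nu)}$ is obtained from $\mathcal{C}_{(\sigma',\theta';\mu',\nu)}$ by imposing $q^{\theta}_i=q'^{\theta'}_i=q'^{\theta'}_{i+L}=\cdots=q'^{\theta'}_{i+(M-1)L}$ for $i=0,\dots,L-1$.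
   Context: $\mathbb{Z}_h=\mathbb{Z}+\tfrac12$. For $K\ge1$, an affine permutation of period $K$ is a bijection $\theta:\mathbb{Z}_h\to\mathbb{Z}_h$ with $\theta(h+K)=\theta(h)+K$ and $\sum_{i=1}^K\theta(i-\frac12)=\sum_{i=1}^K(i-\frac12)$; a map $f:\mathbb{Z}_h\to\{\pm1\}$ is $K$-periodic if $f(h+K)=f(h)$. A Maya diagram is a map $\lambda:\mathbb{Z}_h\to\{\pm1\}$ equal to $-1$ for $h\ll0$ and $+1$ for $h\gg0$. A Young diagram $\lambda=(\lambda_1\ge\lambda_2\ge\cdots)$ is identified with its box set $\{(x,y)\in\mathbb{Z}_{\ge0}^2: x<\lambda_{y+1}\}$; $|\lambda|$ is its number of boxes. For Young diagrams write $\lambda\overset{+}{\succ}\lambda'$ if $\lambda_1\ge\lambda'_1\ge\lambda_2\ge\lambda'_2\ge\cdots$ and $\lambda\overset{-}{\succ}\lambda'$ if the same interlacing holds for the transposes (column lengths). Fix $K\ge1$, a $K$-periodic $\sigma$, an affine permutation $\theta$ of period $K$, a Maya diagram $\mu$ and Young diagrams $\nu=(\nu_+,\nu_-)$. A transition of type $(\sigma,\theta;\mu,\nu)$ is a map $\mathcal{V}$ from $\mathbb{Z}$ to Young diagrams such that $\mathcal{V}(n)=\nu_-$ for $n\ll0$, $\mathcal{V}(n)=\nu_+$ for $n\gg0$, and for every $h\in\mathbb{Z}_h$, writing $\epsilon=\mu(\theta(h))\in\{\pm1\}$ and $s=\sigma(\theta(h))$, one has $\mathcal{V}(h-\epsilon/2)\overset{s}{\succ}\mathcal{V}(h+\epsilon/2)$.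 (It is a known fact, assumed here, that when transitions exist there is a unique minimal transition $\mathcal{V}_{\min}$ with $\mathcal{V}_{\min}(n)\subseteq\mathcal{V}(n)$ for all $n$ and all transitions $\mathcal{V}$.) For a transition $\mathcal{V}$ and $0\le i\le K-1$ set $w_i(\mathcal{V})=\sum_{n\equiv i\ (\mathrm{mod}\ K)}\big(|\mathcal{V}(n)|-|\mathcal{V}_{\min}(n)|\big)$ (a finite sum), and define the formal series in variables $u_0,\dots,u_{K-1}$ $$F^{(K)}_{(\sigma,\theta;\mu,\nu)}(u_0,\dots,u_{K-1})=\sum_{\mathcal{V}}\prod_{i=0}^{K-1}u_i^{w_i(\mathcal{V})},$$ the sum over all transitions of type $(\sigma,\theta;\mu,\nu)$. (Geometrically this is the crystal-melting sum over finite subsets of the ground-state crystal $\{(n,x,y): (x,y)\notin\mathcal{V}_{\min}(n)\}$ obeying the melting rule, with atoms on slice $n$ colored $n \bmod K$.) The non-commutative topological vertex is $\mathcal{C}_{(\sigma,\theta;\mu,\nu)}(q_0,\dots,q_{K-1})=F^{(K)}_{(\sigma,\theta;\mu,\nu)}(q^\theta_0,\dots,q^\theta_{K-1})$, where, with $q_{j+K}=q_j$, $q^\theta_i=q_{a+1/2}q_{a+3/2}\cdots q_{b-1/2}$ if $a<b$ and $q^\theta_i=q_{a-1/2}^{-1}q_{a-3/2}^{-1}\cdots q_{b+1/2}^{-1}$ if $a>b$, for $a=\theta^{-1}(i-\frac12)$, $b=\theta^{-1}(i+\frac12)$. *)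

theory Defs
  imports Main "HOL-Library.Extended_Nat"
begin

text \<open>A half-integer h = m + 1/2 in Z_h is encoded by the integer m.
  A Young diagram is encoded by its (finite, down-closed) box set in nat x nat,
  box (x,y) meaning x < lambda_(y+1).\<close>

definition periodic :: "nat \<Rightarrow> (int \<Rightarrow> int) \<Rightarrow> bool" where
  "periodic K f \<longleftrightarrow> (\<forall>m. f (m + int K) = f m)"

definition pm_valued :: "(int \<Rightarrow> int) \<Rightarrow> bool" where
  "pm_valued f \<longleftrightarrow> (\<forall>m. f m = 1 \<or> f m = -1)"

text \<open>Affine permutation of period K (in the encoding h = m + 1/2: the condition
  sum_{i=1..K} theta(i-1/2) = sum_{i=1..K} (i-1/2) becomes
  sum_{m=0..K-1} theta m = sum_{m=0..K-1} m).\<close>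
definition affine_perm :: "nat \<Rightarrow> (int \<Rightarrow> int) \<Rightarrow> bool" where
  "affine_perm K \<theta> \<longleftrightarrow> bij \<theta> \<and> (\<forall>m. \<theta> (m + int K) = \<theta> m + int K)
     \<and> (\<Sum>m\<in>{0..<int K}. \<theta> m) = (\<Sum>m\<in>{0..<int K}. m)"

definition maya :: "(int \<Rightarrow> int) \<Rightarrow> bool" where
  "maya \<mu> \<longleftrightarrow> pm_valued \<mu> \<and> (\<exists>N. \<forall>m. m \<le> -N \<longrightarrow> \<mu> m = -1)
     \<and> (\<exists>N. \<forall>m. m \<ge> N \<longrightarrow> \<mu> m = 1)"

type_synonym young = "(nat \<times> nat) set"

definition young :: "young \<Rightarrow> bool" where
  "young Y \<longleftrightarrow> finite Y \<and>
     (\<forall>x y x' y'. (x, y) \<in> Y \<longrightarrow> x' \<le> x \<longrightarrow> y' \<le> y \<longrightarrow> (x', y') \<in> Y)"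

text \<open>row Y j = \<lambda>_(j+1) (length of the (j+1)-th row),
      col Y j = (j+1)-th column length (the transpose).\<close>
definition row :: "young \<Rightarrow> nat \<Rightarrow> nat" where
  "row Y j = card {x. (x, j) \<in> Y}"

definition col :: "young \<Rightarrow> nat \<Rightarrow> nat" where
  "col Y j = card {y. (j, y) \<in> Y}"

definition interl_plus :: "young \<Rightarrow> young \<Rightarrow> bool" where
  "interl_plus Y Y' \<longleftrightarrow> (\<forall>j. row Y j \<ge> row Y' j \<and> row Y' j \<ge> row Y (Suc j))"

definition interl_minus :: "young \<Rightarrow> young \<Rightarrow> bool" where
  "interl_minus Y Y' \<longleftrightarrow> (\<forall>j. col Y j \<ge> col Y' j \<and> col Y' j \<ge> col Y (Suc j))"

definition interl :: "int \<Rightarrow> young \<Rightarrow> young \<Rightarrow> bool" where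
  "interl s Y Y' \<longleftrightarrow> (if s = 1 then interl_plus Y Y' else interl_minus Y Y')"

text \<open>For h = m + 1/2 and
  \<epsilon> = \<mu>(\<theta> h): V(h - \<epsilon>/2) >^s V(h + \<epsilon>/2), i.e.
  \<epsilon> = 1: V m >^s V (m+1);  \<epsilon> = -1: V (m+1) >^s V m.\<close>
definition transition ::
  "(int \<Rightarrow> int) \<Rightarrow> (int \<Rightarrow> int) \<Rightarrow> (int \<Rightarrow> int) \<Rightarrow> young \<Rightarrow> young \<Rightarrow> (int \<Rightarrow> young) \<Rightarrow> bool" where
  "transition \<sigma> \<theta> \<mu> \<nu>p \<nu>m V \<longleftrightarrow>
     (\<forall>n. young (V n)) \<and>
     (\<exists>N. \<forall>n. n \<le> -N \<longrightarrow> V n = \<nu>m) \<and>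
     (\<exists>N. \<forall>n. n \<ge> N \<longrightarrow> V n = \<nu>p) \<and>
     (\<forall>m. if \<mu> (\<theta> m) = 1 then interl (\<sigma> (\<theta> m)) (V m) (V (m + 1))
          else interl (\<sigma> (\<theta> m)) (V (m + 1)) (V m))"

definition transitions ::
  "(int \<Rightarrow> int) \<Rightarrow> (int \<Rightarrow> int) \<Rightarrow> (int \<Rightarrow> int) \<Rightarrow> young \<Rightarrow> young \<Rightarrow> (int \<Rightarrow> young) set" where
  "transitions \<sigma> \<theta> \<mu> \<nu>p \<nu>m = {V. transition \<sigma> \<theta> \<mu> \<nu>p \<nu>m V}"

text \<open>The minimal transition (its existence and uniqueness when transitions exist
  is the assumed known fact).\<close>
definition Vmin ::
  "(int \<Rightarrow> int) \<Rightarrow> (int \<Rightarrow> int) \<Rightarrow> (int \<Rightarrow> int) \<Rightarrow> young \<Rightarrow> young \<Rightarrow> (int \<Rightarrow> young)" where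
  "Vmin \<sigma> \<theta> \<mu> \<nu>p \<nu>m = (THE V. transition \<sigma> \<theta> \<mu> \<nu>p \<nu>m V \<and>
      (\<forall>W. transition \<sigma> \<theta> \<mu> \<nu>p \<nu>m W \<longrightarrow> (\<forall>n. V n \<subseteq> W n)))"

definition weights ::
  "nat \<Rightarrow> (int \<Rightarrow> int) \<Rightarrow> (int \<Rightarrow> int) \<Rightarrow> (int \<Rightarrow> int) \<Rightarrow> young \<Rightarrow> young \<Rightarrow> (int \<Rightarrow> young) \<Rightarrow> nat list" where
  "weights K \<sigma> \<theta> \<mu> \<nu>p \<nu>m V =
     map (\<lambda>i. \<Sum>n\<in>{n. n mod int K = int i \<and> V n \<noteq> Vmin \<sigma> \<theta> \<mu> \<nu>p \<nu>m n}.
                card (V n) - card (Vmin \<sigma> \<theta> \<mu> \<nu>p \<nu>m n)) [0..<K]"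

text \<open>Formal power series in K commuting variables u_0..u_{K-1}: coefficient function
  on exponent vectors (nat lists of length K), with values in enat (a coefficient is the
  number of terms with that monomial; \<infinity> if infinitely many).\<close>
type_synonym fseries = "nat list \<Rightarrow> enat"

definition genseries :: "'a set \<Rightarrow> ('a \<Rightarrow> nat list) \<Rightarrow> fseries" where
  "genseries S wt = (\<lambda>a. if finite {x\<in>S. wt x = a} then enat (card {x\<in>S. wt x = a}) else \<infinity>)"

definition F ::
  "nat \<Rightarrow> (int \<Rightarrow> int) \<Rightarrow> (int \<Rightarrow> int) \<Rightarrow> (int \<Rightarrow> int) \<Rightarrow> young \<Rightarrow> young \<Rightarrow> fseries" where
  "F K \<sigma> \<theta> \<mu> \<nu>p \<nu>m = genseries (transitions \<sigma> \<theta> \<mu> \<nu>p \<nu>m) (weights K \<sigma> \<theta> \<mu> \<nu>p \<nu>m)"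

text \<open>Exponent of u_i after the substitution u'_{i+kL} = u_i (0\<le>i<L, 0\<le>k<M).\<close>
definition collapse :: "nat \<Rightarrow> nat \<Rightarrow> nat list \<Rightarrow> nat list" where
  "collapse L M w = map (\<lambda>i. \<Sum>k<M. w ! (i + k * L)) [0..<L]"

text \<open>The substitution u'_{i+kL} := u_i applied to a series in ML variables, giving a
  series in L variables: the coefficient of u^a is the (finite) sum of the coefficients of
  all monomials u'^w which specialize to u^a.\<close>
definition specialize :: "nat \<Rightarrow> nat \<Rightarrow> fseries \<Rightarrow> fseries" where
  "specialize L M c = (\<lambda>a. \<Sum>w\<in>{w. length w = M * L \<and> collapse L M w = a}. c w)"

end

theory Submission
  imports Defs
begin

lemma downset_nat:
  assumes "finite (S::nat set)" "\<And>x y. x \<in> S \<Longrightarrow> y \<le> x \<Longrightarrow> y \<in> S"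
  shows "S = {..<card S}"
proof -
  have sub: "S \<subseteq> {..<card S}"
  proof
    fix x assume "x \<in> S"
    hence "{..x} \<subseteq> S" using assms(2) by auto
    hence "card {..x} \<le> card S" using assms(1) card_mono by blast
    thus "x \<in> {..<card S}" by simp
  qed
  show ?thesis using card_subset_eq[OF _ sub] by simp
qed

lemma row_set: assumes "young Y" shows "{x. (x,j)\<in>Y} = {..<row Y j}"
proof -
  have "finite {x. (x,j)\<in>Y}"
    proof (rule finite_subset[of _ "fst ` Y"])
    show "finite (fst ` Y)" using assms unfolding young_def by simp
  qed (clarify, rule image_eqI[where x="(_,j)"], auto)
  moreover have "\<And>x y. x \<in> {x. (x,j)\<in>Y} \<Longrightarrow> y \<le> x \<Longrightarrow> y \<in> {x. (x,j)\<in>Y}"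
    using assms unfolding young_def by blast
  ultimately show ?thesis unfolding row_def by (rule downset_nat)
qed

lemma col_set: assumes "young Y" shows "{y. (j,y)\<in>Y} = {..<col Y j}"
proof -
  have "finite {y. (j,y)\<in>Y}"
    proof (rule finite_subset[of _ "snd ` Y"])
    show "finite (snd ` Y)" using assms unfolding young_def by simp
  qed (clarify, rule image_eqI[where x="(j,_)"], auto)
  moreover have "\<And>x y. x \<in> {y. (j,y)\<in>Y} \<Longrightarrow> y \<le> x \<Longrightarrow> y \<in> {y. (j,y)\<in>Y}"
    using assms unfolding young_def by blast
  ultimately show ?thesis unfolding col_def by (rule downset_nat)
qed

lemma row_le_iff: assumes "young Y" "young Y'"
  shows "row Y' j \<le> row Y k \<longleftrightarrow> {x. (x,j)\<in>Y'} \<subseteq> {x. (x,k)\<in>Y}"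
  using row_set[OF assms(1), of k] row_set[OF assms(2), of j] by simp

lemma col_le_iff: assumes "young Y" "young Y'"
  shows "col Y' j \<le> col Y k \<longleftrightarrow> {y. (j,y)\<in>Y'} \<subseteq> {y. (k,y)\<in>Y}"
  using col_set[OF assms(1), of k] col_set[OF assms(2), of j] by simp

definition Pp :: "young \<Rightarrow> young \<Rightarrow> bool" where
  "Pp Y Y' \<longleftrightarrow> Y' \<subseteq> Y \<and> (\<forall>x j. (x, Suc j) \<in> Y \<longrightarrow> (x, j) \<in> Y')"
definition Pm :: "young \<Rightarrow> young \<Rightarrow> bool" where
  "Pm Y Y' \<longleftrightarrow> Y' \<subseteq> Y \<and> (\<forall>i y. (Suc i, y) \<in> Y \<longrightarrow> (i, y) \<in> Y')"

lemma plus_char: assumes "young Y" "young Y'" shows "interl_plus Y Y' \<longleftrightarrow> Pp Y Y'"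
proof -
  have "interl_plus Y Y' \<longleftrightarrow> (\<forall>j. {x. (x,j)\<in>Y'} \<subseteq> {x. (x,j)\<in>Y} \<and> {x. (x,Suc j)\<in>Y} \<subseteq> {x. (x,j)\<in>Y'})"
    unfolding interl_plus_def using row_le_iff[OF assms] row_le_iff[OF assms(2) assms(1)] by presburger
  also have "\<dots> \<longleftrightarrow> Pp Y Y'" unfolding Pp_def subset_iff mem_Collect_eq by auto
  finally show ?thesis .
qed

lemma minus_char: assumes "young Y" "young Y'" shows "interl_minus Y Y' \<longleftrightarrow> Pm Y Y'"
proof -
  have "interl_minus Y Y' \<longleftrightarrow> (\<forall>j. {y. (j,y)\<in>Y'} \<subseteq> {y. (j,y)\<in>Y} \<and> {y. (Suc j,y)\<in>Y} \<subseteq> {y. (j,y)\<in>Y'})"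
    unfolding interl_minus_def using col_le_iff[OF assms] col_le_iff[OF assms(2) assms(1)] by presburger
  also have "\<dots> \<longleftrightarrow> Pm Y Y'" unfolding Pm_def subset_iff mem_Collect_eq by auto
  finally show ?thesis .
qed

lemma interl_sub: assumes "young Y" "young Y'" "interl s Y Y'" shows "Y' \<subseteq> Y"
proof (cases "s = 1")
  case True
  hence "interl_plus Y Y'" using assms(3) unfolding interl_def by simp
  thus ?thesis using plus_char[OF assms(1,2)] unfolding Pp_def by blast
next
  case False
  hence "interl_minus Y Y'" using assms(3) unfolding interl_def by simp
  thus ?thesis using minus_char[OF assms(1,2)] unfolding Pm_def by blast
qed

lemma young_INT: assumes "V0 \<in> S" "\<forall>V\<in>S. young (f V)" shows "young (\<Inter>V\<in>S. f V)"
proof -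
  have "finite (f V0)" using assms unfolding young_def by auto
  moreover have "(\<Inter>V\<in>S. f V) \<subseteq> f V0" using assms(1) by blast
  ultimately have fin: "finite (\<Inter>V\<in>S. f V)" by (rule finite_subset[rotated])
  have dc: "(x', y') \<in> (\<Inter>V\<in>S. f V)" if "(x, y) \<in> (\<Inter>V\<in>S. f V)" "x' \<le> x" "y' \<le> y" for x y x' y'
  proof -
    have "(x', y') \<in> f V" if V: "V \<in> S" for V
    proof -
      have "(x, y) \<in> f V" using \<open>(x, y) \<in> (\<Inter>V\<in>S. f V)\<close> V by blast
      moreover have "young (f V)" using assms(2) V by blast
      ultimately show ?thesis using \<open>x' \<le> x\<close> \<open>y' \<le> y\<close> unfolding young_def by blast
    qed
    thus ?thesis by blast
  qed
  show ?thesis unfolding young_def using fin dc by blast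
qed

lemma interl_INT: assumes "V0 \<in> S" "\<forall>V\<in>S. young (f V) \<and> young (g V) \<and> interl s (f V) (g V)"
  shows "interl s (\<Inter>V\<in>S. f V) (\<Inter>V\<in>S. g V)"
proof -
  have yf: "young (\<Inter>V\<in>S. f V)" and yg: "young (\<Inter>V\<in>S. g V)"
    using young_INT[OF assms(1)] assms(2) by auto
  show ?thesis
  proof (cases "s = 1")
    case True
    hence "\<forall>V\<in>S. Pp (f V) (g V)" using assms(2) plus_char unfolding interl_def by auto
    hence "Pp (\<Inter>V\<in>S. f V) (\<Inter>V\<in>S. g V)" unfolding Pp_def by blast
    thus ?thesis using True plus_char[OF yf yg] unfolding interl_def by simp
  next
    case False
    hence "\<forall>V\<in>S. Pm (f V) (g V)" using assms(2) minus_char unfolding interl_def by auto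
    hence "Pm (\<Inter>V\<in>S. f V) (\<Inter>V\<in>S. g V)" unfolding Pm_def by blast
    thus ?thesis using False minus_char[OF yf yg] unfolding interl_def by simp
  qed
qed

lemma affine_shift_nat: assumes "\<forall>m. \<theta> (m + int K) = \<theta> m + int K"
  shows "\<theta> (r + int d * int K) = \<theta> r + int d * int K"
proof (induction d arbitrary: r)
  case 0 thus ?case by simp
next
  case (Suc d)
  have "\<theta> (r + int (Suc d) * int K) = \<theta> ((r + int d * int K) + int K)" by (simp add: algebra_simps)
  also have "\<dots> = \<theta> (r + int d * int K) + int K" using assms by blast
  finally show ?case using Suc by (simp add: algebra_simps)
qed

lemma affine_shift: assumes "\<forall>m. \<theta> (m + int K) = \<theta> m + int K"
  shows "\<theta> (r + k * int K) = \<theta> r + k * int K"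
proof (cases "k \<ge> 0")
  case True
  then obtain d where "k = int d" by (metis nonneg_int_cases)
  thus ?thesis using affine_shift_nat[OF assms] by simp
next
  case False
  define d where "d = nat (-k)"
  have d: "k = - int d" using False d_def by simp
  have "\<theta> ((r - int d * int K) + int d * int K) = \<theta> (r - int d * int K) + int d * int K"
    using affine_shift_nat[OF assms] by blast
  thus ?thesis using d by (simp add: algebra_simps)
qed

lemma affine_bounded: assumes "affine_perm K \<theta>" "K \<ge> 1"
  shows "\<exists>C. \<forall>m. \<theta> m \<le> m + C \<and> m - C \<le> \<theta> m"
proof -
  have sh: "\<forall>m. \<theta> (m + int K) = \<theta> m + int K" using assms unfolding affine_perm_def by blast
  define C where "C = Max ((\<lambda>r. \<bar>\<theta> r - r\<bar>) ` {0..<int K})"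
  have "\<bar>\<theta> m - m\<bar> \<le> C" for m
  proof -
    have m: "m = m mod int K + (m div int K) * int K" by simp
    have "\<theta> m = \<theta> (m mod int K) + (m div int K) * int K"
      using affine_shift[OF sh, of "m mod int K" "m div int K"] m by metis
    hence "\<theta> m - m = \<theta> (m mod int K) - m mod int K" using m by linarith
    moreover have "m mod int K \<in> {0..<int K}" using assms(2) by simp
    hence "\<bar>\<theta> (m mod int K) - m mod int K\<bar> \<in> (\<lambda>r. \<bar>\<theta> r - r\<bar>) ` {0..<int K}" by (rule imageI)
    hence "\<bar>\<theta> (m mod int K) - m mod int K\<bar> \<le> C" unfolding C_def by (intro Max_ge) simp_all
    ultimately show ?thesis by simp
  qed
  hence "\<forall>m. \<theta> m \<le> m + C \<and> m - C \<le> \<theta> m" unfolding abs_le_iff by (auto; smt)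
  thus ?thesis by blast
qed

lemma thresholds: assumes "affine_perm K \<theta>" "K \<ge> 1" "maya \<mu>"
  shows "\<exists>T1. \<forall>m\<le>T1. \<mu> (\<theta> m) \<noteq> 1" and "\<exists>T2. \<forall>m\<ge>T2. \<mu> (\<theta> m) = 1"
proof -
  obtain C where C: "\<forall>m. \<theta> m \<le> m + C \<and> m - C \<le> \<theta> m" using affine_bounded[OF assms(1,2)] by blast
  obtain N1 where N1: "\<forall>m. m \<le> -N1 \<longrightarrow> \<mu> m = -1" using assms(3) unfolding maya_def by blast
  obtain N2 where N2: "\<forall>m. m \<ge> N2 \<longrightarrow> \<mu> m = 1" using assms(3) unfolding maya_def by blast
  show "\<exists>T1. \<forall>m\<le>T1. \<mu> (\<theta> m) \<noteq> 1"
  proof (intro exI allI impI)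
    fix m assume "m \<le> -N1 - C"
    hence "\<theta> m \<le> -N1" using C[rule_format, of m] by linarith
    thus "\<mu> (\<theta> m) \<noteq> 1" using N1 by simp
  qed
  show "\<exists>T2. \<forall>m\<ge>T2. \<mu> (\<theta> m) = 1"
  proof (intro exI allI impI)
    fix m assume "m \<ge> N2 + C"
    hence "\<theta> m \<ge> N2" using C[rule_format, of m] by linarith
    thus "\<mu> (\<theta> m) = 1" using N2 by simp
  qed
qed

lemma trans_left: assumes tr: "transition \<sigma> \<theta> \<mu> \<nu>p \<nu>m V" and T1: "\<forall>m\<le>T1. \<mu> (\<theta> m) \<noteq> 1"
  and n: "n \<le> T1 + 1" shows "\<nu>m \<subseteq> V n"
proof -
  have y: "\<forall>n. young (V n)" using tr unfolding transition_def by blast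
  have step: "V m \<subseteq> V (m+1)" if "m \<le> T1" for m
  proof -
    have "interl (\<sigma> (\<theta> m)) (V (m + 1)) (V m)" using tr T1 that unfolding transition_def by metis
    thus ?thesis using interl_sub y by blast
  qed
  have mono: "V a \<subseteq> V (a + int d)" if "a + int d \<le> T1 + 1" for a d
    using that
  proof (induction d)
    case 0 thus ?case by simp
  next
    case (Suc d)
    hence "V a \<subseteq> V (a + int d)" by simp
    also have "\<dots> \<subseteq> V (a + int d + 1)" using step Suc.prems by simp
    finally show ?case by (simp add: ac_simps)
  qed
  obtain N where N: "\<forall>n. n \<le> -N \<longrightarrow> V n = \<nu>m" using tr unfolding transition_def by blast
  define a where "a = min n (-N)"
  have "V a = \<nu>m" using N a_def by simp
  moreover have "V a \<subseteq> V (a + int (nat (n - a)))" using mono[of a "nat (n-a)"] n a_def by simp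
  ultimately show ?thesis using a_def by simp
qed

lemma trans_right: assumes tr: "transition \<sigma> \<theta> \<mu> \<nu>p \<nu>m V" and T2: "\<forall>m\<ge>T2. \<mu> (\<theta> m) = 1"
  and n: "n \<ge> T2" shows "\<nu>p \<subseteq> V n"
proof -
  have y: "\<forall>n. young (V n)" using tr unfolding transition_def by blast
  have step: "V (m+1) \<subseteq> V m" if "m \<ge> T2" for m
  proof -
    have "interl (\<sigma> (\<theta> m)) (V m) (V (m + 1))" using tr T2 that unfolding transition_def by metis
    thus ?thesis using interl_sub y by blast
  qed
  have mono: "V (a + int d) \<subseteq> V a" if "a \<ge> T2" for a d
  proof (induction d)
    case 0 thus ?case by simp
  next
    case (Suc d)
    have "V (a + int d + 1) \<subseteq> V (a + int d)" using step that by simp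
    also have "\<dots> \<subseteq> V a" using Suc by simp
    finally show ?case by (simp add: ac_simps)
  qed
  obtain N where N: "\<forall>n. n \<ge> N \<longrightarrow> V n = \<nu>p" using tr unfolding transition_def by blast
  define a where "a = max n N"
  have "V a = \<nu>p" using N a_def by simp
  moreover have "V (n + int (nat (a - n))) \<subseteq> V n" using mono[of n "nat (a-n)"] n by simp
  ultimately show ?thesis using a_def by simp
qed

lemma trans_D: assumes "transition \<sigma> \<theta> \<mu> \<nu>p \<nu>m V"
  shows "\<forall>n. young (V n)" "\<exists>N. \<forall>n. n \<le> -N \<longrightarrow> V n = \<nu>m" "\<exists>N. \<forall>n. n \<ge> N \<longrightarrow> V n = \<nu>p"
    "\<forall>m. if \<mu> (\<theta> m) = 1 then interl (\<sigma> (\<theta> m)) (V m) (V (m + 1))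
          else interl (\<sigma> (\<theta> m)) (V (m + 1)) (V m)"
  using assms unfolding transition_def by simp_all

lemma trans_I: assumes "\<forall>n. young (V n)" "\<forall>n. n \<le> -N1 \<longrightarrow> V n = \<nu>m" "\<forall>n. n \<ge> N2 \<longrightarrow> V n = \<nu>p"
    "\<forall>m. if \<mu> (\<theta> m) = 1 then interl (\<sigma> (\<theta> m)) (V m) (V (m + 1))
          else interl (\<sigma> (\<theta> m)) (V (m + 1)) (V m)"
  shows "transition \<sigma> \<theta> \<mu> \<nu>p \<nu>m V"
  unfolding transition_def using assms by (intro conjI exI[of _ N1] exI[of _ N2]) 

lemma min_exists: assumes tr0: "transition \<sigma> \<theta> \<mu> \<nu>p \<nu>m V0"
  and T1: "\<forall>m\<le>T1. \<mu> (\<theta> m) \<noteq> 1" and T2: "\<forall>m\<ge>T2. \<mu> (\<theta> m) = 1"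
  shows "\<exists>W. transition \<sigma> \<theta> \<mu> \<nu>p \<nu>m W \<and> (\<forall>V. transition \<sigma> \<theta> \<mu> \<nu>p \<nu>m V \<longrightarrow> (\<forall>n. W n \<subseteq> V n))"
proof -
  define S where "S = {V. transition \<sigma> \<theta> \<mu> \<nu>p \<nu>m V}"
  define W where "W n = (\<Inter>V\<in>S. V n)" for n
  have V0: "V0 \<in> S" using tr0 S_def by simp
  have yS: "\<forall>V\<in>S. \<forall>n. young (V n)"
  proof (intro ballI)
    fix V assume "V \<in> S"
    hence "transition \<sigma> \<theta> \<mu> \<nu>p \<nu>m V" unfolding S_def by simp
    thus "\<forall>n. young (V n)" by (rule trans_D(1))
  qed
  have yW: "young (W n)" for n unfolding W_def
    by (rule young_INT[OF V0, of "\<lambda>V. V n"]) (use yS in simp)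
  obtain N0 where N0: "\<forall>n. n \<le> -N0 \<longrightarrow> V0 n = \<nu>m" using trans_D(2)[OF tr0] by blast
  obtain N0' where N0': "\<forall>n. n \<ge> N0' \<longrightarrow> V0 n = \<nu>p" using trans_D(3)[OF tr0] by blast
  have left: "\<forall>n. n \<le> - max N0 (-(T1+1)) \<longrightarrow> W n = \<nu>m"
  proof (intro allI impI)
    fix n assume n: "n \<le> - max N0 (-(T1+1))"
    have "W n \<subseteq> V0 n" unfolding W_def using V0 by blast
    hence "W n \<subseteq> \<nu>m" using N0 n by simp
    moreover have "\<nu>m \<subseteq> W n" unfolding W_def S_def
      by (rule INT_greatest) (use trans_left[of \<sigma> \<theta> \<mu> \<nu>p \<nu>m _ T1 n] T1 n in simp)
    ultimately show "W n = \<nu>m" by blast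
  qed
  have right: "\<forall>n. n \<ge> max N0' T2 \<longrightarrow> W n = \<nu>p"
  proof (intro allI impI)
    fix n assume n: "n \<ge> max N0' T2"
    have "W n \<subseteq> V0 n" unfolding W_def using V0 by blast
    hence "W n \<subseteq> \<nu>p" using N0' n by simp
    moreover have "\<nu>p \<subseteq> W n" unfolding W_def S_def
      by (rule INT_greatest) (use trans_right[of \<sigma> \<theta> \<mu> \<nu>p \<nu>m _ T2 n] T2 n in simp)
    ultimately show "W n = \<nu>p" by blast
  qed
  have inter: "if \<mu> (\<theta> m) = 1 then interl (\<sigma> (\<theta> m)) (W m) (W (m + 1))
          else interl (\<sigma> (\<theta> m)) (W (m + 1)) (W m)" for m
  proof (cases "\<mu> (\<theta> m) = 1")
    case True
    have "young (V m) \<and> young (V (m+1)) \<and> interl (\<sigma> (\<theta> m)) (V m) (V (m + 1))" if "V \<in> S" for V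
    proof -
      have tV: "transition \<sigma> \<theta> \<mu> \<nu>p \<nu>m V" using that S_def by simp
      have "interl (\<sigma> (\<theta> m)) (V m) (V (m + 1))" using trans_D(4)[OF tV, rule_format, of m] True by simp
      thus ?thesis using trans_D(1)[OF tV] by simp
    qed
    from interl_INT[OF V0] this True show ?thesis unfolding W_def by simp
  next
    case False
    have "young (V (m+1)) \<and> young (V m) \<and> interl (\<sigma> (\<theta> m)) (V (m+1)) (V m)" if "V \<in> S" for V
    proof -
      have tV: "transition \<sigma> \<theta> \<mu> \<nu>p \<nu>m V" using that S_def by simp
      have "interl (\<sigma> (\<theta> m)) (V (m+1)) (V m)" using trans_D(4)[OF tV, rule_format, of m] False by simp
      thus ?thesis using trans_D(1)[OF tV] by simp
    qed
    from interl_INT[OF V0] this False show ?thesis unfolding W_def by simp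
  qed
  have "transition \<sigma> \<theta> \<mu> \<nu>p \<nu>m W"
    by (rule trans_I[OF _ left right]) (use yW inter in auto)
  moreover have "\<forall>V. transition \<sigma> \<theta> \<mu> \<nu>p \<nu>m V \<longrightarrow> (\<forall>n. W n \<subseteq> V n)"
    unfolding W_def S_def by blast
  ultimately show ?thesis by blast
qed

lemma Vmin_prop: assumes tr0: "transition \<sigma> \<theta> \<mu> \<nu>p \<nu>m V0"
  and T1: "\<forall>m\<le>T1. \<mu> (\<theta> m) \<noteq> 1" and T2: "\<forall>m\<ge>T2. \<mu> (\<theta> m) = 1"
  shows "transition \<sigma> \<theta> \<mu> \<nu>p \<nu>m (Vmin \<sigma> \<theta> \<mu> \<nu>p \<nu>m)"
proof -
  let ?P = "\<lambda>V. transition \<sigma> \<theta> \<mu> \<nu>p \<nu>m V \<and>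
      (\<forall>W. transition \<sigma> \<theta> \<mu> \<nu>p \<nu>m W \<longrightarrow> (\<forall>n. V n \<subseteq> W n))"
  obtain W where W: "?P W" using min_exists[OF assms] by blast
  have "\<exists>!V. ?P V"
  proof (rule ex1I[of _ W])
    show "?P W" by fact
    fix V assume "?P V"
    thus "V = W" using W by (intro ext subset_antisym) blast+
  qed
  from theI'[OF this] show ?thesis unfolding Vmin_def by blast
qed

lemma finite_diff: assumes "transition \<sigma> \<theta> \<mu> \<nu>p \<nu>m V" "transition \<sigma> \<theta> \<mu> \<nu>p \<nu>m U"
  shows "finite {n. V n \<noteq> U n}"
proof -
  obtain a where a: "\<forall>n. n \<le> -a \<longrightarrow> V n = \<nu>m" using trans_D(2)[OF assms(1)] by blast
  obtain b where b: "\<forall>n. n \<le> -b \<longrightarrow> U n = \<nu>m" using trans_D(2)[OF assms(2)] by blast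
  obtain c where c: "\<forall>n. n \<ge> c \<longrightarrow> V n = \<nu>p" using trans_D(3)[OF assms(1)] by blast
  obtain d where d: "\<forall>n. n \<ge> d \<longrightarrow> U n = \<nu>p" using trans_D(3)[OF assms(2)] by blast
  have "{n. V n \<noteq> U n} \<subseteq> {- max a b <..< max c d}"
  proof
    fix n assume "n \<in> {n. V n \<noteq> U n}"
    hence "V n \<noteq> U n" by simp
    moreover have "n \<le> - max a b \<Longrightarrow> V n = U n" using a b by simp
    moreover have "n \<ge> max c d \<Longrightarrow> V n = U n" using c d by simp
    ultimately show "n \<in> {- max a b <..< max c d}" by force
  qed
  thus ?thesis by (rule finite_subset) simp
qed

lemma mod_decomp: fixes n :: int assumes "L \<ge> 1" "M \<ge> 1"
  shows "n mod int (M*L) = int L * (n div int L mod int M) + n mod int L"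
  using mod_mult2_eq'[of n L M] by (simp add: mult.commute)

lemma key_set: fixes L M i k :: nat assumes "L \<ge> 1" "M \<ge> 1" "i < L" "k < M"
  shows "(n mod int L = int i \<and> nat (n div int L mod int M) = k) \<longleftrightarrow> n mod int (M*L) = int (i + k*L)"
proof -
  define q where "q = n div int L mod int M"
  define r where "r = n mod int L"
  have e: "n mod int (M*L) = int L * q + r" using mod_decomp[OF assms(1,2)] q_def r_def by simp
  have q: "0 \<le> q" "q < int M" using assms q_def by simp_all
  have r: "0 \<le> r" "r < int L" using assms r_def by simp_all
  show ?thesis
  proof
    assume "n mod int L = int i \<and> nat (n div int L mod int M) = k"
    hence "r = int i" "q = int k" using q_def r_def q by auto
    thus "n mod int (M*L) = int (i + k*L)" using e by simp
  next
    assume h: "n mod int (M*L) = int (i + k*L)"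
    hence h2: "int L * q + r = int i + int k * int L" using e by simp
    have "(int L * q + r) mod int L = r" using r by simp
    moreover have "(int i + int k * int L) mod int L = int i" using assms(3) by simp
    ultimately have ri: "r = int i" using h2 by metis
    hence "int L * q = int L * int k" using h2 by (simp add: mult.commute)
    hence "q = int k" using assms(1) by simp
    thus "n mod int L = int i \<and> nat (n div int L mod int M) = k" using ri q_def r_def by simp
  qed
qed

lemma collapse_weights:
  fixes d :: "int \<Rightarrow> nat"
  assumes fin: "finite {n. V n \<noteq> U n}" and L: "L \<ge> 1" and M: "M \<ge> 1"
  shows "collapse L M (map (\<lambda>i. \<Sum>n\<in>{n. n mod int (M*L) = int i \<and> V n \<noteq> U n}. d n) [0..<M*L])
       = map (\<lambda>i. \<Sum>n\<in>{n. n mod int L = int i \<and> V n \<noteq> U n}. d n) [0..<L]"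
proof (rule nth_equalityI)
  show "length (collapse L M (map (\<lambda>i. \<Sum>n\<in>{n. n mod int (M*L) = int i \<and> V n \<noteq> U n}. d n) [0..<M*L]))
     = length (map (\<lambda>i. \<Sum>n\<in>{n. n mod int L = int i \<and> V n \<noteq> U n}. d n) [0..<L])"
    unfolding collapse_def by simp
  fix i assume "i < length (collapse L M (map (\<lambda>i. \<Sum>n\<in>{n. n mod int (M*L) = int i \<and> V n \<noteq> U n}. d n) [0..<M*L]))"
  hence i: "i < L" unfolding collapse_def by simp
  define S where "S = {n. n mod int L = int i \<and> V n \<noteq> U n}"
  define g where "g n = nat (n div int L mod int M)" for n :: int
  have finS: "finite S" unfolding S_def by (rule finite_subset[OF _ fin]) blast
  have img: "g ` S \<subseteq> {..<M}" unfolding g_def using M by (auto simp: nat_less_iff)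
  have lt: "i + k * L < M * L" if "k < M" for k
  proof -
    have "(k + 1) * L \<le> M * L" using that by (intro mult_le_mono1) simp
    thus ?thesis using i by simp
  qed
  have blk: "{x \<in> S. g x = k} = {n. n mod int (M*L) = int (i + k*L) \<and> V n \<noteq> U n}" if "k < M" for k
    using key_set[OF L M i that] unfolding S_def g_def by blast
  have "collapse L M (map (\<lambda>i. \<Sum>n\<in>{n. n mod int (M*L) = int i \<and> V n \<noteq> U n}. d n) [0..<M*L]) ! i
      = (\<Sum>k<M. \<Sum>n\<in>{n. n mod int (M*L) = int (i + k*L) \<and> V n \<noteq> U n}. d n)"
    unfolding collapse_def using i lt by (simp del: of_nat_add of_nat_mult)
  also have "\<dots> = (\<Sum>k<M. \<Sum>n\<in>{x \<in> S. g x = k}. d n)"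
    by (rule sum.cong) (simp_all add: blk)
  also have "\<dots> = (\<Sum>n\<in>S. d n)" by (rule sum.group[OF finS _ img]) simp
  also have "\<dots> = map (\<lambda>i. \<Sum>n\<in>{n. n mod int L = int i \<and> V n \<noteq> U n}. d n) [0..<L] ! i"
    using i unfolding S_def by simp
  finally show "collapse L M (map (\<lambda>i. \<Sum>n\<in>{n. n mod int (M*L) = int i \<and> V n \<noteq> U n}. d n) [0..<M*L]) ! i
      = map (\<lambda>i. \<Sum>n\<in>{n. n mod int L = int i \<and> V n \<noteq> U n}. d n) [0..<L] ! i" .
qed

definition gc :: "'a set \<Rightarrow> enat" where
  "gc X = (if finite X then enat (card X) else \<infinity>)"

lemma gc_UN: assumes "finite I" "\<forall>i\<in>I. \<forall>j\<in>I. i \<noteq> j \<longrightarrow> A i \<inter> A j = {}"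
  shows "(\<Sum>i\<in>I. gc (A i)) = gc (\<Union>i\<in>I. A i)"
proof (cases "\<forall>i\<in>I. finite (A i)")
  case True
  hence fin: "finite (\<Union>i\<in>I. A i)" using assms(1) by blast
  have "gc (\<Union>i\<in>I. A i) = enat (\<Sum>i\<in>I. card (A i))"
    unfolding gc_def using fin card_UN_disjoint[OF assms(1) True assms(2)] by simp
  also have "\<dots> = (\<Sum>i\<in>I. enat (card (A i)))" by (simp flip: of_nat_eq_enat)
  also have "\<dots> = (\<Sum>i\<in>I. gc (A i))" using True unfolding gc_def by simp
  finally show ?thesis by simp
next
  case False
  then obtain i where i: "i \<in> I" "infinite (A i)" by blast
  hence inf: "infinite (\<Union>i\<in>I. A i)" by (meson UN_upper finite_subset)
  have "gc (A i) \<le> (\<Sum>i\<in>I. gc (A i))" by (rule member_le_sum[OF i(1) _ assms(1)]) simp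
  hence "(\<Sum>i\<in>I. gc (A i)) = \<infinity>" using i unfolding gc_def by simp
  thus ?thesis using inf unfolding gc_def by simp
qed

lemma collapse_nth: "i < L \<Longrightarrow> collapse L M w ! i = (\<Sum>k<M. w ! (i + k * L))"
  unfolding collapse_def by simp

lemma finite_W: assumes "L \<ge> 1"
  shows "finite {w. length w = M * L \<and> collapse L M w = a}"
proof (rule finite_subset[OF _ finite_lists_length_eq[OF finite_atMost[of "sum_list a"], of "M*L"]])
  show "{w. length w = M * L \<and> collapse L M w = a} \<subseteq> {xs. set xs \<subseteq> {..sum_list a} \<and> length xs = M * L}"
  proof (rule subsetI)
    fix w assume "w \<in> {w. length w = M * L \<and> collapse L M w = a}"
    hence len: "length w = M * L" and ca: "collapse L M w = a" by auto
    have "x \<le> sum_list a" if xw: "x \<in> set w" for x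
    proof -
      obtain j where j: "j < M * L" "w ! j = x" using xw len by (auto simp: in_set_conv_nth)
      define i where "i = j mod L"
      define k where "k = j div L"
      have ji: "j = i + k * L" unfolding i_def k_def by simp
      have iL: "i < L" unfolding i_def using assms by simp
      have kM: "k < M" unfolding k_def using j(1) by (simp add: less_mult_imp_div_less)
      have "w ! j \<le> (\<Sum>k<M. w ! (i + k * L))"
        using member_le_sum[of k "{..<M}" "\<lambda>k. w ! (i + k * L)"] kM ji by simp
      also have "\<dots> = a ! i" using collapse_nth[OF iL, of M w] ca by simp
      also have "\<dots> \<le> sum_list a"
      proof -
        have "length a = L" using arg_cong[OF ca, of length] unfolding collapse_def by simp
        hence "a ! i \<in> set a" using iL by simp
        thus ?thesis by (rule member_le_sum_list) simp
      qed
      finally show "x \<le> sum_list a" using j by simp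
    qed
    thus "w \<in> {xs. set xs \<subseteq> {..sum_list a} \<and> length xs = M * L}" using len by auto
  qed
qed

lemma gen_collapse:
  assumes L: "L \<ge> 1"
    and h: "\<forall>V\<in>T. collapse L M (wA V) = wB V \<and> length (wA V) = M * L"
  shows "specialize L M (genseries T wA) a = genseries T wB a"
proof -
  define W where "W = {w. length w = M * L \<and> collapse L M w = a}"
  have g: "genseries T wt b = gc {x\<in>T. wt x = b}" for wt b unfolding genseries_def gc_def by simp
  have "specialize L M (genseries T wA) a = (\<Sum>w\<in>W. gc {V\<in>T. wA V = w})"
    unfolding specialize_def W_def g by simp
  also have "\<dots> = gc (\<Union>w\<in>W. {V\<in>T. wA V = w})"
    by (rule gc_UN) (use finite_W[OF L] W_def in auto)
  also have "(\<Union>w\<in>W. {V\<in>T. wA V = w}) = {V\<in>T. wB V = a}"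
    unfolding W_def using h by auto
  finally show ?thesis by (simp only: g[of wB a])
qed

theorem mainTheorem2:
  fixes L M :: nat
    and \<sigma> \<theta> \<sigma>' \<theta>' \<mu> \<mu>' :: "int \<Rightarrow> int"
    and \<nu>p \<nu>m :: young
  assumes "L \<ge> 1" and "M \<ge> 1"
    and "periodic L \<sigma>" and "pm_valued \<sigma>" and "affine_perm L \<theta>"
    and "periodic (M * L) \<sigma>'" and "pm_valued \<sigma>'" and "affine_perm (M * L) \<theta>'"
    and "maya \<mu>" and "maya \<mu>'"
    and "young \<nu>p" and "young \<nu>m"
    and "\<sigma> \<circ> \<theta> = \<sigma>' \<circ> \<theta>'" and "\<mu> \<circ> \<theta> = \<mu>' \<circ> \<theta>'"
  shows "specialize L M (F (M * L) \<sigma>' \<theta>' \<mu>' \<nu>p \<nu>m) = F L \<sigma> \<theta> \<mu> \<nu>p \<nu>m"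
proof -
  have es: "\<sigma>' (\<theta>' m) = \<sigma> (\<theta> m)" for m using fun_cong[OF assms(13), of m] by simp
  have em: "\<mu>' (\<theta>' m) = \<mu> (\<theta> m)" for m using fun_cong[OF assms(14), of m] by simp
  have trEq: "transition \<sigma>' \<theta>' \<mu>' \<nu>p \<nu>m = transition \<sigma> \<theta> \<mu> \<nu>p \<nu>m"
    by (rule ext) (simp only: transition_def es em)
  have tsEq: "transitions \<sigma>' \<theta>' \<mu>' \<nu>p \<nu>m = transitions \<sigma> \<theta> \<mu> \<nu>p \<nu>m"
    unfolding transitions_def trEq ..
  have vmEq: "Vmin \<sigma>' \<theta>' \<mu>' \<nu>p \<nu>m = Vmin \<sigma> \<theta> \<mu> \<nu>p \<nu>m"
    unfolding Vmin_def trEq ..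
  have wEq: "weights K \<sigma>' \<theta>' \<mu>' \<nu>p \<nu>m = weights K \<sigma> \<theta> \<mu> \<nu>p \<nu>m" for K
    unfolding weights_def vmEq ..
  define T where "T = transitions \<sigma> \<theta> \<mu> \<nu>p \<nu>m"
  define U where "U = Vmin \<sigma> \<theta> \<mu> \<nu>p \<nu>m"
  obtain T1 where T1: "\<forall>m\<le>T1. \<mu> (\<theta> m) \<noteq> 1" using thresholds(1)[OF assms(5,1,9)] by blast
  obtain T2 where T2: "\<forall>m\<ge>T2. \<mu> (\<theta> m) = 1" using thresholds(2)[OF assms(5,1,9)] by blast
  have h: "\<forall>V\<in>T. collapse L M (weights (M*L) \<sigma> \<theta> \<mu> \<nu>p \<nu>m V) = weights L \<sigma> \<theta> \<mu> \<nu>p \<nu>m V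
             \<and> length (weights (M*L) \<sigma> \<theta> \<mu> \<nu>p \<nu>m V) = M * L"
  proof
    fix V assume "V \<in> T"
    hence tV: "transition \<sigma> \<theta> \<mu> \<nu>p \<nu>m V" unfolding T_def transitions_def by simp
    have tU: "transition \<sigma> \<theta> \<mu> \<nu>p \<nu>m U" unfolding U_def by (rule Vmin_prop[OF tV T1 T2])
    have fin: "finite {n. V n \<noteq> U n}" by (rule finite_diff[OF tV tU])
    show "collapse L M (weights (M*L) \<sigma> \<theta> \<mu> \<nu>p \<nu>m V) = weights L \<sigma> \<theta> \<mu> \<nu>p \<nu>m V
             \<and> length (weights (M*L) \<sigma> \<theta> \<mu> \<nu>p \<nu>m V) = M * L"
      unfolding weights_def U_def[symmetric]
      using collapse_weights[OF fin assms(1,2), of "\<lambda>n. card (V n) - card (U n)"] by simp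
  qed
  show ?thesis
    unfolding F_def tsEq wEq T_def[symmetric]
    by (rule ext, rule gen_collapse[OF assms(1) h])
qed

end
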